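(* Let $\Gamma$ be a single-player extensive-form game with no chance nodes. For every leaf $z\in\mathcal Z$ there exists a behavioral strategy $\pi_z$ that reaches $z$ with probability $\alpha(z)$, and hence $U_1(\pi_z)\ge\alpha(z)u_1(z)$.
   Context: A single-player extensive-form game without chance nodes consists of a finite rooted tree (nodes $\mathcal H$, leaves $\mathcal Z$, actions $A_h$), all nonterminal nodes belonging to Player 1, a utility $u_1:\mathcal Z\to\mathbb R_{\ge0}$, and a partition $\mathcal I_1$ of the nonterminal nodes into infosets with common action sets $A_I$. A behavioral strategy $\pi$ assigns $\pi(\cdot\mid I)\in\Delta(A_I)$ to each $I$; the reach probability of $z$ is the product of $\pi(a_k\mid I_k)$ along its path; $U_1(\pi)=\sum_z\mathbb P(z\mid\pi)u_1(z)$. For $z\in\mathcal Z$ with root-to-$z$ path $(h_0,\dots,h_{d-1})$, let $I_k$ be the infoset of $h_k$ and $a_k$ the action taken at $h_k$. For $I\in\mathcal I_1$ and $a\in A_I$ let $n_z(I)=|\{k:I_k=I\}|$, $n_z(a)=|\{k:I_k=I,a_k=a\}|$, $p_z(a)=n_z(a)/n_z(I)$, and define the absentmindedness coefficient $\alpha(z)=\prod_{I\in\mathcal I_1:n_z(I)>1}\prod_{a\in A_I:n_z(a)>0}p_z(a)^{n_z(a)}\in(0,1]$. *)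

theory Defs
  imports Complex_Main
begin

text \<open>Nodes are histories (lists of actions from the root).\<close>

definition actions :: "'a list set \<Rightarrow> 'a list \<Rightarrow> 'a set" where
  "actions H h = {a. h @ [a] \<in> H}"

definition leaves :: "'a list set \<Rightarrow> 'a list set" where
  "leaves H = {h \<in> H. actions H h = {}}"

definition nonterminals :: "'a list set \<Rightarrow> 'a list set" where
  "nonterminals H = H - leaves H"

definition infosets :: "'a list set \<Rightarrow> ('a list \<Rightarrow> 'i) \<Rightarrow> 'i set" where
  "infosets H infs = infs ` nonterminals H"

text \<open>Action set A_I of infoset I (well defined under the game assumption).\<close>
definition infoset_actions :: "'a list set \<Rightarrow> ('a list \<Rightarrow> 'i) \<Rightarrow> 'i \<Rightarrow> 'a set" where
  "infoset_actions H infs I = actions H (SOME h. h \<in> nonterminals H \<and> infs h = I)"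

definition efg_game :: "'a list set \<Rightarrow> ('a list \<Rightarrow> 'i) \<Rightarrow> bool" where
  "efg_game H infs \<longleftrightarrow>
     finite H \<and> [] \<in> H \<and> (\<forall>h a. h @ [a] \<in> H \<longrightarrow> h \<in> H) \<and>
     (\<forall>h\<in>nonterminals H. \<forall>h'\<in>nonterminals H. infs h = infs h' \<longrightarrow> actions H h = actions H h')"

definition behavioral_strategy :: "'a list set \<Rightarrow> ('a list \<Rightarrow> 'i) \<Rightarrow> ('i \<Rightarrow> 'a \<Rightarrow> real) \<Rightarrow> bool" where
  "behavioral_strategy H infs \<pi> \<longleftrightarrow>
     (\<forall>I\<in>infosets H infs. (\<forall>a\<in>infoset_actions H infs I. \<pi> I a \<ge> 0) \<and>
        (\<Sum>a\<in>infoset_actions H infs I. \<pi> I a) = 1)"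

definition reach_prob :: "('a list \<Rightarrow> 'i) \<Rightarrow> ('i \<Rightarrow> 'a \<Rightarrow> real) \<Rightarrow> 'a list \<Rightarrow> real" where
  "reach_prob infs \<pi> z = (\<Prod>k<length z. \<pi> (infs (take k z)) (z ! k))"

definition expected_utility ::
  "'a list set \<Rightarrow> ('a list \<Rightarrow> 'i) \<Rightarrow> ('a list \<Rightarrow> real) \<Rightarrow> ('i \<Rightarrow> 'a \<Rightarrow> real) \<Rightarrow> real" where
  "expected_utility H infs u \<pi> = (\<Sum>z\<in>leaves H. reach_prob infs \<pi> z * u z)"

definition n_infoset :: "('a list \<Rightarrow> 'i) \<Rightarrow> 'a list \<Rightarrow> 'i \<Rightarrow> nat" where
  "n_infoset infs z I = card {k. k < length z \<and> infs (take k z) = I}"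

definition n_action :: "('a list \<Rightarrow> 'i) \<Rightarrow> 'a list \<Rightarrow> 'i \<Rightarrow> 'a \<Rightarrow> nat" where
  "n_action infs z I a = card {k. k < length z \<and> infs (take k z) = I \<and> z ! k = a}"

definition absent_coeff :: "'a list set \<Rightarrow> ('a list \<Rightarrow> 'i) \<Rightarrow> 'a list \<Rightarrow> real" where
  "absent_coeff H infs z =
     (\<Prod>I\<in>{I\<in>infosets H infs. n_infoset infs z I > 1}.
        \<Prod>a\<in>{a\<in>infoset_actions H infs I. n_action infs z I a > 0}.
          (real (n_action infs z I a) / real (n_infoset infs z I)) ^ n_action infs z I a)"

end

theory Submission
  imports Defs
begin

lemma prefix_in:
  assumes pc: "\<forall>h a. h @ [a] \<in> H \<longrightarrow> h \<in> H"
  shows "ys @ zs \<in> H \<Longrightarrow> ys \<in> H"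
proof (induction zs rule: rev_induct)
  case Nil then show ?case by simp
next
  case (snoc x xs)
  then show ?case using pc by (metis append_assoc)
qed

lemma path_facts:
  assumes game: "efg_game H infs" and zH: "z \<in> H" and k: "k < length z"
  shows "take k z \<in> nonterminals H" "z ! k \<in> actions H (take k z)"
proof -
  have pc: "\<forall>h a. h @ [a] \<in> H \<longrightarrow> h \<in> H" using game by (simp add: efg_game_def)
  have "take (Suc k) z @ drop (Suc k) z \<in> H" using zH by simp
  then have "take (Suc k) z \<in> H" using prefix_in[OF pc] by blast
  then have a: "take k z @ [z ! k] \<in> H" using k by (simp add: take_Suc_conv_app_nth)
  then show "z ! k \<in> actions H (take k z)" by (simp add: actions_def)
  have "take k z \<in> H" using a pc by blast
  then show "take k z \<in> nonterminals H"
    using \<open>z ! k \<in> actions H (take k z)\<close> by (auto simp: nonterminals_def leaves_def)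
qed

lemma infoset_actions_eq:
  assumes game: "efg_game H infs" and h: "h \<in> nonterminals H"
  shows "infoset_actions H infs (infs h) = actions H h"
proof -
  have ex: "\<exists>h'. h' \<in> nonterminals H \<and> infs h' = infs h" using h by blast
  define h' where "h' = (SOME h'. h' \<in> nonterminals H \<and> infs h' = infs h)"
  have "h' \<in> nonterminals H \<and> infs h' = infs h" unfolding h'_def by (rule someI_ex[OF ex])
  then show ?thesis using game h unfolding infoset_actions_def h'_def[symmetric] efg_game_def
    by metis
qed

lemma finite_actions:
  assumes "finite H" shows "finite (actions H h)"
proof -
  have "actions H h = (\<lambda>a. h @ [a]) -` H" by (auto simp: actions_def)
  then show ?thesis using finite_vimageI[OF assms, of "\<lambda>a. h @ [a]"] by (simp add: inj_def)
qed

lemma nonterm_actions_ne: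
  assumes "h \<in> nonterminals H" shows "actions H h \<noteq> {}"
  using assms by (auto simp: nonterminals_def leaves_def)

theorem lemma2:
  fixes H :: "'a list set" and infs :: "'a list \<Rightarrow> 'i" and u :: "'a list \<Rightarrow> real"
    and z :: "'a list"
  assumes game: "efg_game H infs"
    and u_nonneg: "\<forall>z'\<in>leaves H. u z' \<ge> 0"
    and leaf: "z \<in> leaves H"
  shows "\<exists>\<pi>. behavioral_strategy H infs \<pi> \<and>
             reach_prob infs \<pi> z = absent_coeff H infs z \<and>
             expected_utility H infs u \<pi> \<ge> absent_coeff H infs z * u z"
proof -
  have finH: "finite H" using game by (simp add: efg_game_def)
  have zH: "z \<in> H" using leaf by (simp add: leaves_def)
  define S where "S I = {k. k < length z \<and> infs (take k z) = I}" for I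
  define nI where "nI I = n_infoset infs z I" for I
  define nA where "nA I a = n_action infs z I a" for I a
  have nI_S: "nI I = card (S I)" for I by (simp add: nI_def S_def n_infoset_def)
  have nA_S: "nA I a = card {k \<in> S I. z ! k = a}" for I a
    unfolding nA_def S_def n_action_def by (rule arg_cong[where f=card]) auto
  have finS: "finite (S I)" for I unfolding S_def by auto
  define \<pi> where "\<pi> I a = (if nI I > 0 then real (nA I a) / real (nI I)
                          else 1 / real (card (infoset_actions H infs I)))" for I a
  have pi_nonneg: "\<pi> I a \<ge> 0" for I a by (simp add: \<pi>_def)
  have inS_act: "z ! k \<in> infoset_actions H infs I" if "k \<in> S I" for k I
  proof -
    have k: "k < length z" and I: "I = infs (take k z)" using that by (auto simp: S_def)
    show ?thesis using path_facts[OF game zH k] infoset_actions_eq[OF game] I by simp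
  qed
  have beh: "behavioral_strategy H infs \<pi>"
    unfolding behavioral_strategy_def
  proof (intro ballI conjI)
    fix I a show "0 \<le> \<pi> I a" by (rule pi_nonneg)
  next
    fix I assume "I \<in> infosets H infs"
    then obtain h0 where h0: "h0 \<in> nonterminals H" and I: "I = infs h0"
      by (auto simp: infosets_def)
    define A where "A = infoset_actions H infs I"
    have A: "A = actions H h0" unfolding A_def I using infoset_actions_eq[OF game h0] .
    have finA: "finite A" using A finite_actions[OF finH] by simp
    have neA: "A \<noteq> {}" using A nonterm_actions_ne[OF h0] by simp
    show "(\<Sum>a\<in>infoset_actions H infs I. \<pi> I a) = 1"
    proof (cases "nI I > 0")
      case True
      have "(\<Sum>a\<in>A. real (nA I a)) = (\<Sum>a\<in>A. \<Sum>k\<in>{k \<in> S I. z ! k = a}. (1::real))"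
        by (simp add: nA_S)
      also have "\<dots> = (\<Sum>k\<in>S I. (1::real))"
        by (rule sum.group[OF finS finA]) (auto simp: A_def inS_act)
      also have "\<dots> = real (nI I)" by (simp add: nI_S)
      finally have e: "(\<Sum>a\<in>A. real (nA I a)) = real (nI I)" .
      have "(\<Sum>a\<in>A. \<pi> I a) = (\<Sum>a\<in>A. real (nA I a)) / real (nI I)"
        using True by (simp add: \<pi>_def sum_divide_distrib)
      then show ?thesis using e True by (simp add: A_def)
    next
      case False
      then have "(\<Sum>a\<in>A. \<pi> I a) = (\<Sum>a\<in>A. 1 / real (card A))" by (simp add: \<pi>_def A_def)
      then show ?thesis using finA neA by (simp add: A_def)
    qed
  qed
  define key where "key k = infs (take k z)" for k
  define P where "P = key ` {..<length z}"
  define r where "r I a = real (nA I a) / real (nI I)" for I a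
  have finP: "finite P" by (simp add: P_def)
  have S_key: "{k \<in> {..<length z}. key k = I} = S I" for I by (auto simp: S_def key_def)
  have "reach_prob infs \<pi> z = (\<Prod>k<length z. r (key k) (z ! k))"
    unfolding reach_prob_def
  proof (rule prod.cong[OF refl])
    fix k assume "k \<in> {..<length z}"
    then have "k \<in> S (key k)" by (auto simp: S_def key_def)
    then have "nI (key k) > 0" using finS by (auto simp: nI_S card_gt_0_iff)
    then show "\<pi> (infs (take k z)) (z ! k) = r (key k) (z ! k)"
      by (simp add: \<pi>_def r_def key_def)
  qed
  also have "\<dots> = (\<Prod>I\<in>P. \<Prod>k\<in>S I. r I (z ! k))"
  proof -
    have "(\<Prod>I\<in>P. \<Prod>k\<in>{k \<in> {..<length z}. key k = I}. r (key k) (z ! k))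
          = (\<Prod>k<length z. r (key k) (z ! k))"
      by (rule prod.group) (auto simp: P_def)
    moreover have "(\<Prod>k\<in>{k \<in> {..<length z}. key k = I}. r (key k) (z ! k))
          = (\<Prod>k\<in>S I. r I (z ! k))" for I
      unfolding S_key by (rule prod.cong) (auto simp: S_def key_def)
    ultimately show ?thesis by simp
  qed
  also have "\<dots> = (\<Prod>I\<in>P. \<Prod>a\<in>{a \<in> infoset_actions H infs I. nA I a > 0}. r I a ^ nA I a)"
  proof (rule prod.cong[OF refl])
    fix I assume "I \<in> P"
    define B where "B = {a \<in> infoset_actions H infs I. nA I a > 0}"
    have finB: "finite B"
    proof -
      have "B \<subseteq> (\<lambda>k. z ! k) ` S I"
      proof
        fix a assume "a \<in> B"
        then have "card {k \<in> S I. z ! k = a} > 0" by (simp add: B_def nA_S)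
        then obtain k where "k \<in> S I" "z ! k = a" by (metis (mono_tags, lifting) card.empty empty_Collect_eq less_irrefl)
        then show "a \<in> (\<lambda>k. z ! k) ` S I" by blast
      qed
      then show ?thesis using finS finite_subset by blast
    qed
    have img: "(\<lambda>k. z ! k) ` S I \<subseteq> B"
    proof
      fix a assume "a \<in> (\<lambda>k. z ! k) ` S I"
      then obtain k where k: "k \<in> S I" "a = z ! k" by blast
      have "{k \<in> S I. z ! k = a} \<noteq> {}" using k by blast
      moreover have "finite {k \<in> S I. z ! k = a}" using finS by simp
      ultimately have "nA I a > 0" by (simp add: nA_S card_gt_0_iff)
      then show "a \<in> B" using inS_act[OF k(1)] k by (simp add: B_def)
    qed
    have "(\<Prod>k\<in>S I. r I (z ! k)) = (\<Prod>a\<in>B. \<Prod>k\<in>{k \<in> S I. z ! k = a}. r I (z ! k))"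
      by (rule prod.group[OF finS finB img, symmetric])
    also have "\<dots> = (\<Prod>a\<in>B. r I a ^ nA I a)"
    proof (rule prod.cong[OF refl])
      fix a
      have "(\<Prod>k\<in>{k \<in> S I. z ! k = a}. r I (z ! k)) = (\<Prod>k\<in>{k \<in> S I. z ! k = a}. r I a)"
        by (rule prod.cong) auto
      then show "(\<Prod>k\<in>{k \<in> S I. z ! k = a}. r I (z ! k)) = r I a ^ nA I a"
        by (simp add: nA_S)
    qed
    finally show "(\<Prod>k\<in>S I. r I (z ! k)) = (\<Prod>a\<in>B. r I a ^ nA I a)" .
  qed
  also have "\<dots> = absent_coeff H infs z"
  proof -
    have sub: "{I \<in> infosets H infs. nI I > 1} \<subseteq> P"
    proof
      fix I assume "I \<in> {I \<in> infosets H infs. nI I > 1}"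
      then have "S I \<noteq> {}" by (auto simp: nI_S)
      then obtain k where "k \<in> S I" by blast
      then show "I \<in> P" by (auto simp: P_def S_def key_def)
    qed
    have "(\<Prod>I\<in>{I \<in> infosets H infs. nI I > 1}. \<Prod>a\<in>{a \<in> infoset_actions H infs I. nA I a > 0}. r I a ^ nA I a)
        = (\<Prod>I\<in>P. \<Prod>a\<in>{a \<in> infoset_actions H infs I. nA I a > 0}. r I a ^ nA I a)"
    proof (rule prod.mono_neutral_left[OF finP sub])
      show "\<forall>I\<in>P - {I \<in> infosets H infs. nI I > 1}.
              (\<Prod>a\<in>{a \<in> infoset_actions H infs I. nA I a > 0}. r I a ^ nA I a) = 1"
      proof
        fix I assume I: "I \<in> P - {I \<in> infosets H infs. nI I > 1}"
        then obtain k where k: "k < length z" "I = infs (take k z)" by (auto simp: P_def key_def)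
        have "I \<in> infosets H infs" using path_facts(1)[OF game zH k(1)] k(2)
          by (auto simp: infosets_def)
        then have le1: "nI I \<le> 1" using I by auto
        have "k \<in> S I" using k by (auto simp: S_def)
        then have pos: "nI I > 0" using finS by (auto simp: nI_S card_gt_0_iff)
        have nAle: "nA I a \<le> nI I" for a unfolding nA_S nI_S by (rule card_mono[OF finS]) auto
        show "(\<Prod>a\<in>{a \<in> infoset_actions H infs I. nA I a > 0}. r I a ^ nA I a) = 1"
        proof (intro prod.neutral ballI)
          fix a assume a: "a \<in> {a \<in> infoset_actions H infs I. nA I a > 0}"
          have "nI I = 1" using le1 pos by simp
          moreover have "nA I a = 1" using a nAle[of a] le1 by (simp add: le_antisym)
          ultimately show "r I a ^ nA I a = 1" by (simp add: r_def)
        qed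
      qed
    qed
    then show ?thesis by (simp add: absent_coeff_def nI_def nA_def r_def)
  qed
  finally have reach: "reach_prob infs \<pi> z = absent_coeff H infs z" .
  have finL: "finite (leaves H)" using finH by (simp add: leaves_def)
  have rp_nonneg: "reach_prob infs \<pi> z' \<ge> 0" for z'
    unfolding reach_prob_def by (rule prod_nonneg) (simp add: pi_nonneg)
  have "reach_prob infs \<pi> z * u z \<le> expected_utility H infs u \<pi>"
    unfolding expected_utility_def
    by (rule member_le_sum[OF leaf _ finL]) (use u_nonneg rp_nonneg in auto)
  then show ?thesis using beh reach by (intro exI[of _ \<pi>]) auto
qed

end
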